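(* Let $m,\ell\in\mathbb{N}$ with $m\ge4\ell$, and let $\mathcal{S}=(i_1,\dots,i_{\ell'})\in[m]^{\ell'}$ be a sequence of length $\ell'\le\ell$. Then $\mathcal{S}$ is $(m,\ell)$-clustered or $(m,\ell)$-dispersed.
   Context: $[m]=\{1,\dots,m\}$, $\mathbb{N}=\{1,2,\dots\}$, and $[a,b]$ denotes the integer interval $\{a,\dots,b\}$. Let $I=\{i_1,\dots,i_{\ell'}\}$. $\mathcal{S}$ is $(m,\ell)$-clustered if there exist $k\in\mathbb{N}$, $p_1,\dots,p_k\in[m]$, $q_1,\dots,q_k\in\mathbb{N}$ with: (i) the intervals $[p_c,p_c+q_c]$ are pairwise disjoint, contained in $[1,m]$, and their union contains $I$; (ii) for every $c\in[k]$, with $K_c=[p_c,p_c+q_c]\cap I$, $q_c+1\ge\lfloor\frac{m}{2\ell}\rfloor\cdot\min\big(\max(K_c)-p_c+1,\;p_c+q_c-\min(K_c)+1\big)$; (iii) $\sum_{j=1}^k(q_j+1)+2(\ell-\ell')\le m$. $\mathcal{S}$ is $(m,\ell)$-dispersed if there exist $k\in\mathbb{Z}_{\ge0}$, $\psi,p_1,\dots,p_k\in[m]$ and $\xi,q_1,\dots,q_k\in\mathbb{N}$ such that, with $K=I\cap[\psi,\psi+\xi]$: (i) the intervals $[\psi,\psi+\xi],[p_1,p_1+q_1],\dots,[p_k,p_k+q_k]$ are pairwise disjoint, contained in $[1,m]$, and their union contains $I$; (ii) for $j=1,\dots,k$, $q_j\ge 2\cdot|\{c\in[\ell']:i_c\in[p_j,p_j+q_j]\}|-1$;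 (iii) $K=\{\psi\}$ or $K=\{\psi+\xi\}$; (iv) $\xi\ge\lfloor\frac{m}{2\ell}\rfloor\cdot|\{c:i_c\in K\}|-1$; (v) $(\xi+1)+\sum_{j=1}^k(q_j+1)+2(\ell-\ell')\le m$. *)

theory Defs
  imports Main
begin

text \<open>A sequence S = (i_1,...,i_l') is a list; its entries form the set I = set S.
  Positions are 0-based internally: entry i_c is S ! (c-1).  Intervals are indexed by c in {1..k}.\<close>

definition clustered :: "nat \<Rightarrow> nat \<Rightarrow> nat list \<Rightarrow> bool" where
  "clustered m l S \<longleftrightarrow>
    (\<exists>k::nat. \<exists>p q :: nat \<Rightarrow> nat. k \<ge> 1 \<and>
       (\<forall>c\<in>{1..k}. p c \<in> {1..m} \<and> q c \<ge> 1) \<and>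
       (\<forall>c\<in>{1..k}. \<forall>d\<in>{1..k}. c \<noteq> d \<longrightarrow> {p c..p c + q c} \<inter> {p d..p d + q d} = {}) \<and>
       (\<forall>c\<in>{1..k}. {p c..p c + q c} \<subseteq> {1..m}) \<and>
       set S \<subseteq> (\<Union>c\<in>{1..k}. {p c..p c + q c}) \<and>
       (\<forall>c\<in>{1..k}. let K = {p c..p c + q c} \<inter> set S in
          q c + 1 \<ge> (m div (2 * l)) *
             min (Max K - p c + 1) (p c + q c - Min K + 1)) \<and>
       (\<Sum>j=1..k. q j + 1) + 2 * (l - length S) \<le> m)"

definition dispersed :: "nat \<Rightarrow> nat \<Rightarrow> nat list \<Rightarrow> bool" where
  "dispersed m l S \<longleftrightarrow>
    (\<exists>k::nat. \<exists>\<psi> \<xi> :: nat. \<exists>p q :: nat \<Rightarrow> nat.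
       \<psi> \<in> {1..m} \<and> \<xi> \<ge> 1 \<and>
       (\<forall>j\<in>{1..k}. p j \<in> {1..m} \<and> q j \<ge> 1) \<and>
       (\<forall>j\<in>{1..k}. {\<psi>..\<psi> + \<xi>} \<inter> {p j..p j + q j} = {}) \<and>
       (\<forall>c\<in>{1..k}. \<forall>d\<in>{1..k}. c \<noteq> d \<longrightarrow> {p c..p c + q c} \<inter> {p d..p d + q d} = {}) \<and>
       {\<psi>..\<psi> + \<xi>} \<subseteq> {1..m} \<and>
       (\<forall>j\<in>{1..k}. {p j..p j + q j} \<subseteq> {1..m}) \<and>
       set S \<subseteq> {\<psi>..\<psi> + \<xi>} \<union> (\<Union>j\<in>{1..k}. {p j..p j + q j}) \<and>
       (\<forall>j\<in>{1..k}. int (q j) \<ge>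
          2 * int (card {c. c < length S \<and> S ! c \<in> {p j..p j + q j}}) - 1) \<and>
       (let K = set S \<inter> {\<psi>..\<psi> + \<xi>} in
          (K = {\<psi>} \<or> K = {\<psi> + \<xi>}) \<and>
          int \<xi> \<ge> int (m div (2 * l)) * int (card {c. c < length S \<and> S ! c \<in> K}) - 1) \<and>
       (\<xi> + 1) + (\<Sum>j=1..k. q j + 1) + 2 * (l - length S) \<le> m)"

end

theory Submission
  imports Defs
begin

definition NN :: "(nat \<Rightarrow> nat) \<Rightarrow> nat \<Rightarrow> nat \<Rightarrow> nat" where
  "NN w a b = (\<Sum>y\<in>{a..b}. w y)"

lemma NN_Suc: "a \<le> Suc b \<Longrightarrow> NN w a (Suc b) = NN w a b + w (Suc b)"
  unfolding NN_def by simp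

lemma NN_empty: "b < a \<Longrightarrow> NN w a b = 0"
  unfolding NN_def by simp

lemma NN_split: assumes "a \<le> Suc b" "b \<le> c" shows "NN w a c = NN w a b + NN w (Suc b) c"
proof -
  have "{a..c} = {a..b} \<union> {Suc b..c}" using assms by auto
  moreover have "{a..b} \<inter> {Suc b..c} = {}" by auto
  ultimately show ?thesis unfolding NN_def by (simp add: sum.union_disjoint)
qed

lemma NN_mono: "a' \<le> a \<Longrightarrow> b \<le> b' \<Longrightarrow> NN w a b \<le> NN w a' b'"
  unfolding NN_def by (rule sum_mono2) auto

lemma NN_pos: "a \<le> y \<Longrightarrow> y \<le> b \<Longrightarrow> 0 < w y \<Longrightarrow> 0 < NN w a b"
  unfolding NN_def by (metis atLeastAtMost_iff finite_atLeastAtMost gr0I le_0_eq member_le_sum zero_le)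

lemma NN_single: "NN w a a = w a" unfolding NN_def by simp

lemma NN_reflect: assumes "a \<le> b" "b \<le> C"
  shows "NN (\<lambda>y. w (C - y)) a b = NN w (C - b) (C - a)"
  unfolding NN_def
  by (rule sum.reindex_bij_witness[of _ "\<lambda>z. C - z" "\<lambda>z. C - z"]) (use assms in auto)

lemma rg_aux:
  assumes "1 \<le> A"
  shows "\<exists>L. sorted_wrt (\<lambda>x y. snd x < fst y) L \<and>
    (\<forall>(a,b)\<in>set L. A \<le> a \<and> a \<le> v \<and> 0 < w a \<and> a \<le> b \<and> b + 1 - a = 2 * NN w a (min b v)) \<and>
    (\<forall>y. A \<le> y \<longrightarrow> y \<le> v \<longrightarrow> 0 < w y \<longrightarrow> (\<exists>(a,b)\<in>set L. a \<le> y \<and> y \<le> b)) \<and>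
    sum_list (map (\<lambda>(a,b). b + 1 - a) L) = 2 * NN w A v"
proof (induction v)
  case 0
  show ?case using assms by (intro exI[of _ "[]"]) (auto simp: NN_empty)
next
  case (Suc v)
  then obtain L where s: "sorted_wrt (\<lambda>x y. snd x < fst y) L"
    and e: "\<forall>(a,b)\<in>set L. A \<le> a \<and> a \<le> v \<and> 0 < w a \<and> a \<le> b \<and> b + 1 - a = 2 * NN w a (min b v)"
    and c: "\<forall>y. A \<le> y \<longrightarrow> y \<le> v \<longrightarrow> 0 < w y \<longrightarrow> (\<exists>(a,b)\<in>set L. a \<le> y \<and> y \<le> b)"
    and su: "sum_list (map (\<lambda>(a,b). b + 1 - a) L) = 2 * NN w A v" by blast
  define W where "W = w (Suc v)"
  have NA: "NN w A (Suc v) = NN w A v + (if A \<le> Suc v then W else 0)"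
    by (cases "A \<le> Suc v") (auto simp: NN_Suc NN_empty W_def)
  show ?case
  proof (cases "Suc v < A \<or> W = 0")
    case True
    show ?thesis
    proof (intro exI[of _ L] conjI)
      show "sorted_wrt (\<lambda>x y. snd x < fst y) L" by fact
      show "\<forall>(a,b)\<in>set L. A \<le> a \<and> a \<le> Suc v \<and> 0 < w a \<and> a \<le> b \<and> b + 1 - a = 2 * NN w a (min b (Suc v))"
      proof (intro ballI, clarify)
        fix a b assume ab: "(a,b) \<in> set L"
        with e have h: "A \<le> a" "a \<le> v" "0 < w a" "a \<le> b" "b + 1 - a = 2 * NN w a (min b v)" by auto
        have "NN w a (min b (Suc v)) = NN w a (min b v)"
        proof (cases "b \<le> v")
          case True thus ?thesis by (simp add: min_def)
        next
          case False
          hence "min b (Suc v) = Suc v" "min b v = v" by auto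
          thus ?thesis using NN_Suc[of a v w] h True W_def by auto
        qed
        thus "A \<le> a \<and> a \<le> Suc v \<and> 0 < w a \<and> a \<le> b \<and> b + 1 - a = 2 * NN w a (min b (Suc v))"
          using h by auto
      qed
      show "\<forall>y. A \<le> y \<longrightarrow> y \<le> Suc v \<longrightarrow> 0 < w y \<longrightarrow> (\<exists>(a,b)\<in>set L. a \<le> y \<and> y \<le> b)"
        using c True W_def by (metis le_Suc_eq not_less not_less_zero)
      show "sum_list (map (\<lambda>(a,b). b + 1 - a) L) = 2 * NN w A (Suc v)"
        using su NA True by auto
    qed
  next
    case False
    hence A: "A \<le> Suc v" and Wp: "0 < W" by auto
    show ?thesis
    proof (cases "\<exists>L' a b. L = L' @ [(a,b)] \<and> Suc v \<le> b")
      case True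
      then obtain L' a b where L: "L = L' @ [(a,b)]" and b: "Suc v \<le> b" by blast
      define L2 where "L2 = L' @ [(a, b + 2 * W)]"
      have ha: "A \<le> a" "a \<le> v" "0 < w a" "a \<le> b" "b + 1 - a = 2 * NN w a (min b v)"
        using e L by auto
      have sL': "sorted_wrt (\<lambda>x y. snd x < fst y) L'" and lt: "\<forall>x\<in>set L'. snd x < a"
        using s L by (auto simp: sorted_wrt_append)
      show ?thesis
      proof (intro exI[of _ L2] conjI)
        show "sorted_wrt (\<lambda>x y. snd x < fst y) L2" using sL' lt by (auto simp: L2_def sorted_wrt_append)
        have mb: "min b v = v" using b by auto
        have nn: "NN w a (Suc v) = NN w a v + W" using NN_Suc[of a v w] ha W_def by auto
        show "\<forall>(a',b')\<in>set L2. A \<le> a' \<and> a' \<le> Suc v \<and> 0 < w a' \<and> a' \<le> b' \<and> b' + 1 - a' = 2 * NN w a' (min b' (Suc v))"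
        proof (intro ballI, clarify)
          fix a' b' assume "(a',b') \<in> set L2"
          hence "(a',b') \<in> set L' \<or> (a' = a \<and> b' = b + 2 * W)" by (auto simp: L2_def)
          thus "A \<le> a' \<and> a' \<le> Suc v \<and> 0 < w a' \<and> a' \<le> b' \<and> b' + 1 - a' = 2 * NN w a' (min b' (Suc v))"
          proof
            assume in': "(a',b') \<in> set L'"
            hence h: "A \<le> a'" "a' \<le> v" "0 < w a'" "a' \<le> b'" "b' + 1 - a' = 2 * NN w a' (min b' v)"
              using e L by auto
            have "b' < a" using lt in' by fastforce
            hence "min b' (Suc v) = min b' v" using ha by auto
            thus ?thesis using h by auto
          next
            assume "a' = a \<and> b' = b + 2 * W"
            moreover have "min (b + 2 * W) (Suc v) = Suc v" using b by auto
            ultimately show ?thesis using ha mb nn by auto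
          qed
        qed
        show "\<forall>y. A \<le> y \<longrightarrow> y \<le> Suc v \<longrightarrow> 0 < w y \<longrightarrow> (\<exists>(a',b')\<in>set L2. a' \<le> y \<and> y \<le> b')"
        proof (intro allI impI)
          fix y assume y: "A \<le> y" "y \<le> Suc v" "0 < w y"
          show "\<exists>(a',b')\<in>set L2. a' \<le> y \<and> y \<le> b'"
          proof (cases "y = Suc v")
            case True thus ?thesis using ha b by (auto simp: L2_def)
          next
            case False
            then obtain a' b' where "(a',b') \<in> set L" "a' \<le> y" "y \<le> b'" using c y by force
            moreover have "a' = a \<and> b' = b \<or> (a',b') \<in> set L'" using \<open>(a',b') \<in> set L\<close> L by auto
            ultimately show ?thesis
            proof (elim disjE conjE)
              assume "a' = a" "b' = b"
              thus ?thesis using \<open>a' \<le> y\<close> \<open>y \<le> b'\<close> by (auto simp: L2_def intro!: bexI[of _ "(a, b + 2*W)"])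
            next
              assume "(a',b') \<in> set L'"
              thus ?thesis using \<open>a' \<le> y\<close> \<open>y \<le> b'\<close> by (auto simp: L2_def intro!: bexI[of _ "(a', b')"])
            qed
          qed
        qed
        show "sum_list (map (\<lambda>(a,b). b + 1 - a) L2) = 2 * NN w A (Suc v)"
          using su NA A ha unfolding L2_def L by auto
      qed
    next
      case False
      have lastlt: "\<forall>x\<in>set L. snd x < Suc v"
      proof (cases L rule: rev_exhaust)
        case Nil thus ?thesis by simp
      next
        case (snoc L' z)
        obtain a b where z: "z = (a,b)" by (cases z)
        have "b < Suc v" using False snoc z by auto
        moreover have "\<forall>x\<in>set L'. snd x < a" using s snoc z by (auto simp: sorted_wrt_append)
        moreover have "a \<le> b" using e snoc z by auto
        ultimately show ?thesis using snoc z by force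
      qed
      define L2 where "L2 = L @ [(Suc v, Suc v + 2 * W - 1)]"
      show ?thesis
      proof (intro exI[of _ L2] conjI)
        show "sorted_wrt (\<lambda>x y. snd x < fst y) L2" using s lastlt by (auto simp: L2_def sorted_wrt_append)
        show "\<forall>(a',b')\<in>set L2. A \<le> a' \<and> a' \<le> Suc v \<and> 0 < w a' \<and> a' \<le> b' \<and> b' + 1 - a' = 2 * NN w a' (min b' (Suc v))"
        proof (intro ballI, clarify)
          fix a' b' assume "(a',b') \<in> set L2"
          hence "(a',b') \<in> set L \<or> (a' = Suc v \<and> b' = Suc v + 2 * W - 1)" by (auto simp: L2_def)
          thus "A \<le> a' \<and> a' \<le> Suc v \<and> 0 < w a' \<and> a' \<le> b' \<and> b' + 1 - a' = 2 * NN w a' (min b' (Suc v))"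
          proof
            assume in': "(a',b') \<in> set L"
            hence h: "A \<le> a'" "a' \<le> v" "0 < w a'" "a' \<le> b'" "b' + 1 - a' = 2 * NN w a' (min b' v)"
              using e by auto
            have "b' < Suc v" using lastlt in' by fastforce
            hence "min b' (Suc v) = min b' v" by auto
            thus ?thesis using h by auto
          next
            assume h: "a' = Suc v \<and> b' = Suc v + 2 * W - 1"
            have "min (Suc v + 2 * W - 1) (Suc v) = Suc v" using Wp by auto
            thus ?thesis using h A Wp W_def NN_single[of w "Suc v"] by auto
          qed
        qed
        show "\<forall>y. A \<le> y \<longrightarrow> y \<le> Suc v \<longrightarrow> 0 < w y \<longrightarrow> (\<exists>(a',b')\<in>set L2. a' \<le> y \<and> y \<le> b')"
        proof (intro allI impI)
          fix y assume y: "A \<le> y" "y \<le> Suc v" "0 < w y"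
          show "\<exists>(a',b')\<in>set L2. a' \<le> y \<and> y \<le> b'"
          proof (cases "y = Suc v")
            case True thus ?thesis using Wp by (auto simp: L2_def)
          next
            case False
            then obtain a' b' where "(a',b') \<in> set L" "a' \<le> y" "y \<le> b'" using c y by force
            thus ?thesis unfolding L2_def by auto
          qed
        qed
        show "sum_list (map (\<lambda>(a,b). b + 1 - a) L2) = 2 * NN w A (Suc v)"
          using su NA A Wp unfolding L2_def by auto
      qed
    qed
  qed
qed

lemma rg:
  assumes "1 \<le> A" "\<forall>s. A \<le> s \<longrightarrow> s \<le> B \<longrightarrow> 2 * NN w s B \<le> B + 1 - s"
  shows "\<exists>L. sorted_wrt (\<lambda>x y. snd x < fst y) L \<and>
    (\<forall>(a,b)\<in>set L. A \<le> a \<and> a < b \<and> b \<le> B \<and> b + 1 - a = 2 * NN w a b) \<and>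
    (\<forall>y. A \<le> y \<longrightarrow> y \<le> B \<longrightarrow> 0 < w y \<longrightarrow> (\<exists>(a,b)\<in>set L. a \<le> y \<and> y \<le> b)) \<and>
    sum_list (map (\<lambda>(a,b). b + 1 - a) L) = 2 * NN w A B"
proof -
  obtain L where s: "sorted_wrt (\<lambda>x y. snd x < fst y) L"
    and e: "\<forall>(a,b)\<in>set L. A \<le> a \<and> a \<le> B \<and> 0 < w a \<and> a \<le> b \<and> b + 1 - a = 2 * NN w a (min b B)"
    and c: "\<forall>y. A \<le> y \<longrightarrow> y \<le> B \<longrightarrow> 0 < w y \<longrightarrow> (\<exists>(a,b)\<in>set L. a \<le> y \<and> y \<le> b)"
    and su: "sum_list (map (\<lambda>(a,b). b + 1 - a) L) = 2 * NN w A B"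
    using rg_aux[OF assms(1), of B w] by blast
  have e2: "\<forall>(a,b)\<in>set L. A \<le> a \<and> a < b \<and> b \<le> B \<and> b + 1 - a = 2 * NN w a b"
  proof (intro ballI, clarify)
    fix a b assume "(a,b) \<in> set L"
    hence h: "A \<le> a" "a \<le> B" "0 < w a" "a \<le> b" "b + 1 - a = 2 * NN w a (min b B)" using e by auto
    have p: "0 < NN w a (min b B)" using NN_pos[of a a "min b B" w] h by auto
    have "NN w a (min b B) \<le> NN w a B" by (rule NN_mono) auto
    hence "b + 1 - a \<le> B + 1 - a" using h assms(2) by fastforce
    hence bB: "b \<le> B" using h by auto
    hence "min b B = b" by auto
    thus "A \<le> a \<and> a < b \<and> b \<le> B \<and> b + 1 - a = 2 * NN w a b" using h p bB by auto
  qed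
  show ?thesis using s e2 c su by blast
qed

lemma lg:
  assumes "1 \<le> A" "\<forall>z. A \<le> z \<longrightarrow> z \<le> B \<longrightarrow> 2 * NN w A z \<le> z + 1 - A"
  shows "\<exists>L. sorted_wrt (\<lambda>x y. snd x < fst y) L \<and>
    (\<forall>(a,b)\<in>set L. A \<le> a \<and> a < b \<and> b \<le> B \<and> b + 1 - a = 2 * NN w a b) \<and>
    (\<forall>y. A \<le> y \<longrightarrow> y \<le> B \<longrightarrow> 0 < w y \<longrightarrow> (\<exists>(a,b)\<in>set L. a \<le> y \<and> y \<le> b)) \<and>
    sum_list (map (\<lambda>(a,b). b + 1 - a) L) = 2 * NN w A B"
proof (cases "B < A")
  case True thus ?thesis by (intro exI[of _ "[]"]) (auto simp: NN_empty)
next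
  case False
  define C where "C = A + B"
  define w' where "w' = (\<lambda>y. w (C - y))"
  have H: "\<forall>s. A \<le> s \<longrightarrow> s \<le> B \<longrightarrow> 2 * NN w' s B \<le> B + 1 - s"
  proof (intro allI impI)
    fix s assume s: "A \<le> s" "s \<le> B"
    have "NN w' s B = NN w A (C - s)" unfolding w'_def using NN_reflect[of s B C w] s C_def by auto
    moreover have "2 * NN w A (C - s) \<le> (C - s) + 1 - A" using assms(2)[rule_format, of "C - s"] s C_def by auto
    ultimately show "2 * NN w' s B \<le> B + 1 - s" using s C_def by auto
  qed
  obtain L where s: "sorted_wrt (\<lambda>x y. snd x < fst y) L"
    and e: "\<forall>(a,b)\<in>set L. A \<le> a \<and> a < b \<and> b \<le> B \<and> b + 1 - a = 2 * NN w' a b"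
    and c: "\<forall>y. A \<le> y \<longrightarrow> y \<le> B \<longrightarrow> 0 < w' y \<longrightarrow> (\<exists>(a,b)\<in>set L. a \<le> y \<and> y \<le> b)"
    and su: "sum_list (map (\<lambda>(a,b). b + 1 - a) L) = 2 * NN w' A B"
    using rg[OF assms(1) H] by blast
  define f where "f = (\<lambda>(a::nat,b::nat). (C - b, C - a))"
  define L2 where "L2 = rev (map f L)"
  show ?thesis
  proof (intro exI[of _ L2] conjI)
    show "sorted_wrt (\<lambda>x y. snd x < fst y) L2"
      unfolding L2_def sorted_wrt_rev sorted_wrt_map
    proof (rule sorted_wrt_mono_rel[OF _ s])
      fix x y assume "x \<in> set L" "y \<in> set L" "snd x < fst y"
      moreover obtain a b where "x = (a,b)" by (cases x)
      moreover obtain c d where "y = (c,d)" by (cases y)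
      ultimately show "snd (f y) < fst (f x)" using e C_def unfolding f_def by fastforce
    qed
    show "\<forall>(a,b)\<in>set L2. A \<le> a \<and> a < b \<and> b \<le> B \<and> b + 1 - a = 2 * NN w a b"
    proof (intro ballI, clarify)
      fix a b assume "(a,b) \<in> set L2"
      then obtain a' b' where ab: "(a',b') \<in> set L" "a = C - b'" "b = C - a'" unfolding L2_def f_def by auto
      hence h: "A \<le> a'" "a' < b'" "b' \<le> B" "b' + 1 - a' = 2 * NN w' a' b'" using e by auto
      have "NN w' a' b' = NN w a b" unfolding w'_def using NN_reflect[of a' b' C w] h ab C_def by auto
      thus "A \<le> a \<and> a < b \<and> b \<le> B \<and> b + 1 - a = 2 * NN w a b" using h ab C_def by auto
    qed
    show "\<forall>y. A \<le> y \<longrightarrow> y \<le> B \<longrightarrow> 0 < w y \<longrightarrow> (\<exists>(a,b)\<in>set L2. a \<le> y \<and> y \<le> b)"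
    proof (intro allI impI)
      fix y assume y: "A \<le> y" "y \<le> B" "0 < w y"
      have "0 < w' (C - y)" unfolding w'_def using y C_def by auto
      moreover have "A \<le> C - y" "C - y \<le> B" using y C_def by auto
      ultimately have "\<exists>(a,b)\<in>set L. a \<le> C - y \<and> C - y \<le> b" using c by blast
      then obtain a b where ab: "(a,b) \<in> set L" "a \<le> C - y" "C - y \<le> b" by blast
      have "b \<le> B" using e ab by auto
      hence "C - b \<le> y \<and> y \<le> C - a" using ab y C_def by auto
      moreover have "(C - b, C - a) \<in> set L2" using ab unfolding L2_def f_def by force
      ultimately show "\<exists>(a,b)\<in>set L2. a \<le> y \<and> y \<le> b" by blast
    qed
    have mm: "map (\<lambda>(a,b). b + 1 - a) (map f L) = map (\<lambda>(a,b). b + 1 - a) L"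
      unfolding map_map
    proof (rule map_cong[OF refl])
      fix x assume "x \<in> set L"
      moreover obtain a b where "x = (a,b)" by (cases x)
      ultimately show "((\<lambda>(a,b). b + 1 - a) \<circ> f) x = (\<lambda>(a,b). b + 1 - a) x"
        using e C_def unfolding f_def by fastforce
    qed
    have nn: "NN w' A B = NN w A B" unfolding w'_def using NN_reflect[of A B C w] False C_def by auto
    have "sum_list (map (\<lambda>(a,b). b + 1 - a) L2) = sum_list (map (\<lambda>(a,b). b + 1 - a) L)"
      unfolding L2_def by (simp only: rev_map[symmetric] sum_list_rev mm)
    thus "sum_list (map (\<lambda>(a,b). b + 1 - a) L2) = 2 * NN w A B"
      using su nn by simp
  qed
qed

lemma fam:
  fixes L :: "(nat \<times> nat) list" and p q :: "nat \<Rightarrow> nat"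
  assumes s: "sorted_wrt (\<lambda>x y. snd x < fst y) L" and ab: "\<forall>(a,b)\<in>set L. a \<le> b"
  and p: "p = (\<lambda>j. fst (L!(j-1)))" and q: "q = (\<lambda>j. snd (L!(j-1)) - fst (L!(j-1)))"
  shows "\<forall>c\<in>{1..length L}. (p c, p c + q c) \<in> set L"
    and "\<forall>x\<in>set L. \<exists>c\<in>{1..length L}. x = (p c, p c + q c)"
    and "\<forall>c\<in>{1..length L}. \<forall>d\<in>{1..length L}. c \<noteq> d \<longrightarrow> {p c..p c + q c} \<inter> {p d..p d + q d} = {}"
    and "(\<Sum>j=1..length L. q j + 1) = sum_list (map (\<lambda>(a,b). b + 1 - a) L)"
proof -
  have pq: "(p c, p c + q c) = L!(c-1)" if "c \<in> {1..length L}" for c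
  proof -
    have m: "L!(c-1) \<in> set L" using that by auto
    obtain a b where e: "L!(c-1) = (a,b)" by (cases "L!(c-1)")
    have "a \<le> b" using ab m e by fastforce
    hence "a + (b - a) = b" by simp
    thus ?thesis unfolding p q using e by simp
  qed
  show "\<forall>c\<in>{1..length L}. (p c, p c + q c) \<in> set L"
  proof
    fix c assume c: "c \<in> {1..length L}"
    hence "L!(c-1) \<in> set L" by auto
    thus "(p c, p c + q c) \<in> set L" using pq[OF c] by simp
  qed
  show "\<forall>x\<in>set L. \<exists>c\<in>{1..length L}. x = (p c, p c + q c)"
  proof
    fix x assume "x \<in> set L"
    then obtain i where i: "i < length L" "x = L!i" by (auto simp: in_set_conv_nth)
    hence "Suc i \<in> {1..length L}" by auto
    moreover have "x = (p (Suc i), p (Suc i) + q (Suc i))" using pq[OF \<open>Suc i \<in> {1..length L}\<close>] i by simp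
    ultimately show "\<exists>c\<in>{1..length L}. x = (p c, p c + q c)" by blast
  qed
  have lt: "snd (L!(c-1)) < fst (L!(d-1))" if "c \<in> {1..length L}" "d \<in> {1..length L}" "c < d" for c d
    using sorted_wrt_nth_less[OF s, of "c-1" "d-1"] that by auto
  show "\<forall>c\<in>{1..length L}. \<forall>d\<in>{1..length L}. c \<noteq> d \<longrightarrow> {p c..p c + q c} \<inter> {p d..p d + q d} = {}"
  proof (intro ballI impI)
    fix c d assume cd: "c \<in> {1..length L}" "d \<in> {1..length L}" "c \<noteq> d"
    have e1: "p c + q c = snd (L!(c-1))" "p d + q d = snd (L!(d-1))" "p c = fst (L!(c-1))" "p d = fst (L!(d-1))"
      using pq[OF cd(1)] pq[OF cd(2)] by (metis prod.sel)+
    show "{p c..p c + q c} \<inter> {p d..p d + q d} = {}"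
    proof (cases "c < d")
      case True thus ?thesis using lt[OF cd(1,2)] e1 by auto
    next
      case False hence "d < c" using cd by auto
      thus ?thesis using lt[OF cd(2,1)] e1 by auto
    qed
  qed
  have "sum_list (map (\<lambda>(a,b). b + 1 - a) L) = (\<Sum>i<length L. (\<lambda>(a,b). b + 1 - a) (L!i))"
    by (simp add: sum_list_sum_nth atLeast0LessThan)
  also have "\<dots> = (\<Sum>i<length L. q (Suc i) + 1)"
  proof (rule sum.cong[OF refl])
    fix i assume "i \<in> {..<length L}"
    hence "Suc i \<in> {1..length L}" by auto
    from pq[OF this] have "L!i = (p (Suc i), p (Suc i) + q (Suc i))" by simp
    thus "(\<lambda>(a,b). b + 1 - a) (L!i) = q (Suc i) + 1" by simp
  qed
  also have "\<dots> = (\<Sum>j=1..length L. q j + 1)"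
    by (simp add: sum.atLeast1_atMost_eq)
  finally show "(\<Sum>j=1..length L. q j + 1) = sum_list (map (\<lambda>(a,b). b + 1 - a) L)" by simp
qed

definition wt :: "nat list \<Rightarrow> nat \<Rightarrow> nat" where
  "wt S y = card {c. c < length S \<and> S!c = y}"

lemma card_idx: assumes "finite J"
  shows "card {c. c < length S \<and> S!c \<in> J} = (\<Sum>y\<in>J. wt S y)"
proof -
  have "{c. c < length S \<and> S!c \<in> J} = (\<Union>y\<in>J. {c. c < length S \<and> S!c = y})" by auto
  moreover have "card (\<Union>y\<in>J. {c. c < length S \<and> S!c = y}) = (\<Sum>y\<in>J. card {c. c < length S \<and> S!c = y})"
    by (rule card_UN_disjoint) (use assms in auto)
  ultimately show ?thesis unfolding wt_def by simp
qed

lemma card_idx_NN: "card {c. c < length S \<and> S!c \<in> {a..b}} = NN (wt S) a b"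
  unfolding NN_def by (rule card_idx) simp

lemma wt_pos: "0 < wt S y \<longleftrightarrow> y \<in> set S"
proof -
  have "0 < wt S y \<longleftrightarrow> {c. c < length S \<and> S!c = y} \<noteq> {}" unfolding wt_def by (simp add: card_gt_0_iff)
  thus ?thesis by (auto simp: in_set_conv_nth)
qed

lemma NN_total: assumes "set S \<subseteq> {1..m}" shows "NN (wt S) 1 m = length S"
proof -
  have "{c. c < length S \<and> S!c \<in> {1..m}} = {..<length S}" using assms nth_mem by fastforce
  thus ?thesis using card_idx_NN[of S 1 m] by simp
qed

lemma t_facts: assumes "1 \<le> l" "4 * l \<le> (m::nat)"
  shows "2 \<le> m div (2*l)" "m div (2*l) * (2*l) \<le> m"
proof -
  show "2 \<le> m div (2*l)" using assms by (subst less_eq_div_iff_mult_less_eq) auto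
  show "m div (2*l) * (2*l) \<le> m" by simp
qed

lemma wt_le_len: "wt S x \<le> length S"
proof -
  have "wt S x \<le> card {..<length S}" unfolding wt_def by (rule card_mono) auto
  thus ?thesis by simp
qed

lemma NN_only: assumes "set S \<inter> {a..b} = {x}"
  shows "NN (wt S) a b = wt S x"
proof -
  have x: "{x} \<subseteq> {a..b}" using assms by blast
  have z: "\<forall>i\<in>{a..b} - {x}. wt S i = 0"
  proof
    fix i assume "i \<in> {a..b} - {x}"
    hence "i \<notin> set S" using assms by blast
    thus "wt S i = 0" using wt_pos[of S i] by linarith
  qed
  have "(\<Sum>y\<in>{a..b}. wt S y) = (\<Sum>y\<in>{x}. wt S y)"
    by (rule sum.mono_neutral_right[OF finite_atLeastAtMost x z])
  thus ?thesis unfolding NN_def by simp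
qed

lemma disp_build:
  fixes S :: "nat list" and m l zs ws psi xi x :: nat
  assumes l1: "1 \<le> l" and m4: "4*l \<le> m" and len: "length S \<le> l" and setS: "set S \<subseteq> {1..m}"
  and zs: "zs = 2 * NN (wt S) 1 zs" and zsH: "\<forall>z. zs < z \<longrightarrow> z \<le> m \<longrightarrow> 2 * NN (wt S) 1 z < z"
  and ws: "m + 1 - ws = 2 * NN (wt S) ws m" and ws1: "1 \<le> ws" "ws \<le> m+1"
  and wsH: "\<forall>s. 1 \<le> s \<longrightarrow> s < ws \<longrightarrow> 2 * NN (wt S) s m < m + 1 - s"
  and ord: "zs < psi" "psi + xi < ws"
  and K: "set S \<inter> {psi..psi+xi} = {x}" "x = psi \<or> x = psi + xi"
  and xi: "xi + 1 = (m div (2*l)) * wt S x"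
  shows "dispersed m l S"
proof -
  define w where "w = wt S"
  define t where "t = m div (2*l)"
  have t2: "2 \<le> t" and t2l: "t * (2*l) \<le> m" using t_facts[OF l1 m4] t_def by auto
  have xS: "x \<in> set S" using K by auto
  have wx: "0 < w x" using xS wt_pos w_def by auto
  have wxn: "w x \<le> length S" using wt_le_len w_def by auto
  have txi: "2 \<le> t * w x" using t2 wx by (metis mult_le_mono nat_mult_1_right One_nat_def Suc_leI)
  have xi1: "1 \<le> xi" using xi txi t_def w_def by auto
  have HL: "\<forall>z. Suc zs \<le> z \<longrightarrow> z \<le> psi - 1 \<longrightarrow> 2 * NN w (Suc zs) z \<le> z + 1 - Suc zs"
  proof (intro allI impI)
    fix z assume z: "Suc zs \<le> z" "z \<le> psi - 1"
    have "2 * NN w 1 z < z" using zsH z ord ws1 w_def by auto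
    moreover have "NN w 1 z = NN w 1 zs + NN w (Suc zs) z" using NN_split[of 1 zs z w] z by auto
    ultimately show "2 * NN w (Suc zs) z \<le> z + 1 - Suc zs" using zs w_def by auto
  qed
  have HR: "\<forall>s. Suc (psi + xi) \<le> s \<longrightarrow> s \<le> ws - 1 \<longrightarrow> 2 * NN w s (ws - 1) \<le> ws - 1 + 1 - s"
  proof (intro allI impI)
    fix s assume s: "Suc (psi + xi) \<le> s" "s \<le> ws - 1"
    have "2 * NN w s m < m + 1 - s" using wsH s ord w_def by auto
    moreover have "NN w s m = NN w s (ws - 1) + NN w ws m" using NN_split[of s "ws - 1" m w] s ws1 ord by auto
    ultimately show "2 * NN w s (ws - 1) \<le> ws - 1 + 1 - s" using ws w_def s ord by auto
  qed
  obtain L1 where s1: "sorted_wrt (\<lambda>x y. snd x < fst y) L1"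
    and e1: "\<forall>(a,b)\<in>set L1. Suc zs \<le> a \<and> a < b \<and> b \<le> psi - 1 \<and> b + 1 - a = 2 * NN w a b"
    and c1: "\<forall>y. Suc zs \<le> y \<longrightarrow> y \<le> psi - 1 \<longrightarrow> 0 < w y \<longrightarrow> (\<exists>(a,b)\<in>set L1. a \<le> y \<and> y \<le> b)"
    and su1: "sum_list (map (\<lambda>(a,b). b + 1 - a) L1) = 2 * NN w (Suc zs) (psi - 1)"
    using lg[of "Suc zs" "psi - 1" w] HL by auto
  obtain L2 where s2: "sorted_wrt (\<lambda>x y. snd x < fst y) L2"
    and e2: "\<forall>(a,b)\<in>set L2. Suc (psi + xi) \<le> a \<and> a < b \<and> b \<le> ws - 1 \<and> b + 1 - a = 2 * NN w a b"
    and c2: "\<forall>y. Suc (psi + xi) \<le> y \<longrightarrow> y \<le> ws - 1 \<longrightarrow> 0 < w y \<longrightarrow> (\<exists>(a,b)\<in>set L2. a \<le> y \<and> y \<le> b)"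
    and su2: "sum_list (map (\<lambda>(a,b). b + 1 - a) L2) = 2 * NN w (Suc (psi + xi)) (ws - 1)"
    using rg[of "Suc (psi + xi)" "ws - 1" w] HR by auto
  define PB where "PB = (if 0 < zs then [(1::nat, zs)] else [])"
  define SB where "SB = (if ws \<le> m then [(ws, m)] else [])"
  define L where "L = PB @ L1 @ L2 @ SB"
  have zs2: "0 < zs \<Longrightarrow> 1 < zs" using zs by presburger
  have ws2: "ws \<le> m \<Longrightarrow> ws < m" using ws by presburger
  have P1: "\<forall>(a,b)\<in>set L. 1 \<le> a \<and> a < b \<and> b \<le> m \<and> b + 1 - a = 2 * NN w a b \<and> (b < psi \<or> psi + xi < a)"
  proof (intro ballI, clarify)
    fix a b assume "(a,b) \<in> set L"
    hence "(a,b) \<in> set PB \<or> (a,b) \<in> set L1 \<or> (a,b) \<in> set L2 \<or> (a,b) \<in> set SB" unfolding L_def by auto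
    thus "1 \<le> a \<and> a < b \<and> b \<le> m \<and> b + 1 - a = 2 * NN w a b \<and> (b < psi \<or> psi + xi < a)"
    proof (elim disjE)
      assume "(a,b) \<in> set PB" thus ?thesis using zs2 zs ord ws1 w_def by (auto simp: PB_def split: if_splits)
    next
      assume "(a,b) \<in> set L1" thus ?thesis using e1 ord ws1 by fastforce
    next
      assume "(a,b) \<in> set L2" thus ?thesis using e2 ord ws1 by fastforce
    next
      assume "(a,b) \<in> set SB" thus ?thesis using ws2 ws ord ws1 w_def by (auto simp: SB_def split: if_splits)
    qed
  qed
  have P2: "sorted_wrt (\<lambda>x y. snd x < fst y) L"
    unfolding L_def sorted_wrt_append
    using s1 s2 e1 e2 ord ws1 by (fastforce simp: PB_def SB_def)
  have P3: "\<forall>y\<in>set S. y \<in> {psi..psi+xi} \<or> (\<exists>(a,b)\<in>set L. a \<le> y \<and> y \<le> b)"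
  proof
    fix y assume yS: "y \<in> set S"
    hence y: "1 \<le> y" "y \<le> m" "0 < w y" using setS wt_pos w_def by auto
    consider "y \<le> zs" | "zs < y \<and> y < psi" | "psi \<le> y \<and> y \<le> psi + xi" | "psi + xi < y \<and> y < ws" | "ws \<le> y"
      by linarith
    thus "y \<in> {psi..psi+xi} \<or> (\<exists>(a,b)\<in>set L. a \<le> y \<and> y \<le> b)"
    proof cases
      case 1 thus ?thesis using y by (auto simp: L_def PB_def)
    next
      case 2
      hence "Suc zs \<le> y" "y \<le> psi - 1" by auto
      hence "\<exists>(a,b)\<in>set L1. a \<le> y \<and> y \<le> b" using c1 y by blast
      then obtain a b where "(a,b)\<in>set L1" "a \<le> y" "y \<le> b" by blast
      thus ?thesis unfolding L_def by auto
    next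
      case 3 thus ?thesis by auto
    next
      case 4
      hence "Suc (psi + xi) \<le> y" "y \<le> ws - 1" by auto
      hence "\<exists>(a,b)\<in>set L2. a \<le> y \<and> y \<le> b" using c2 y by blast
      then obtain a b where "(a,b)\<in>set L2" "a \<le> y" "y \<le> b" by blast
      thus ?thesis unfolding L_def by auto
    next
      case 5 thus ?thesis using y by (auto simp: L_def SB_def)
    qed
  qed
  have sPB: "sum_list (map (\<lambda>(a,b). b + 1 - a) PB) = 2 * NN w 1 zs"
    using zs w_def by (auto simp: PB_def NN_empty)
  have sSB: "sum_list (map (\<lambda>(a,b). b + 1 - a) SB) = 2 * NN w ws m"
    using ws ws1 w_def by (auto simp: SB_def NN_empty)
  have P4: "sum_list (map (\<lambda>(a,b). b + 1 - a) L) = 2 * NN w 1 zs + 2 * NN w (Suc zs) (psi - 1) + 2 * NN w (Suc (psi + xi)) (ws - 1) + 2 * NN w ws m"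
    unfolding L_def using sPB sSB su1 su2 by simp
  have n: "length S = NN w 1 zs + NN w (Suc zs) (psi - 1) + NN w psi (psi + xi) + NN w (Suc (psi + xi)) (ws - 1) + NN w ws m"
  proof -
    have "length S = NN w 1 m" using NN_total[OF setS] w_def by simp
    also have "\<dots> = NN w 1 zs + NN w (Suc zs) m" using NN_split[of 1 zs m w] ord ws1 by auto
    also have "NN w (Suc zs) m = NN w (Suc zs) (psi - 1) + NN w psi m" using NN_split[of "Suc zs" "psi - 1" m w] ord ws1 by auto
    also have "NN w psi m = NN w psi (psi + xi) + NN w (Suc (psi + xi)) m" using NN_split[of psi "psi + xi" m w] ord ws1 by auto
    also have "NN w (Suc (psi + xi)) m = NN w (Suc (psi + xi)) (ws - 1) + NN w ws m" using NN_split[of "Suc (psi + xi)" "ws - 1" m w] ord ws1 by auto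
    finally show ?thesis by simp
  qed
  have nx: "NN w psi (psi + xi) = w x" using NN_only[OF K(1)] w_def by simp
  have budget: "(xi + 1) + sum_list (map (\<lambda>(a,b). b + 1 - a) L) + 2 * (l - length S) \<le> m"
  proof -
    have a1: "t * w x \<le> t * l" using wxn len by (meson le_trans mult_le_mono2)
    have a2: "sum_list (map (\<lambda>(a,b). b + 1 - a) L) + 2 * w x = 2 * length S" using P4 n nx by simp
    have a3: "xi + 1 = t * w x" using xi t_def w_def by simp
    have a4: "2 * (t * l) \<le> m" using t2l by (simp add: algebra_simps)
    show ?thesis using a1 a2 a3 a4 m4 len wxn by linarith
  qed
  define k where "k = length L"
  define p where "p = (\<lambda>j. fst (L!(j-1)))"
  define q where "q = (\<lambda>j. snd (L!(j-1)) - fst (L!(j-1)))"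
  have abL: "\<forall>(a,b)\<in>set L. a \<le> b" using P1 by fastforce
  note F = fam[OF P2 abL p_def q_def]
  have Pj: "1 \<le> p j \<and> p j < p j + q j \<and> p j + q j \<le> m \<and> p j + q j + 1 - p j = 2 * NN w (p j) (p j + q j) \<and> (p j + q j < psi \<or> psi + xi < p j)"
    if "j \<in> {1..k}" for j
    using F(1) that P1 k_def by fastforce
  show ?thesis
    unfolding dispersed_def
  proof (rule exI[of _ k], rule exI[of _ psi], rule exI[of _ xi], rule exI[of _ p], rule exI[of _ q], intro conjI)
    show "psi \<in> {1..m}" using ord ws1 by auto
    show "1 \<le> xi" by fact
    show "\<forall>j\<in>{1..k}. p j \<in> {1..m} \<and> 1 \<le> q j" using Pj by fastforce
    show "\<forall>j\<in>{1..k}. {psi..psi + xi} \<inter> {p j..p j + q j} = {}" using Pj by fastforce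
    show "\<forall>c\<in>{1..k}. \<forall>d\<in>{1..k}. c \<noteq> d \<longrightarrow> {p c..p c + q c} \<inter> {p d..p d + q d} = {}" using F(3) k_def by simp
    show "{psi..psi + xi} \<subseteq> {1..m}" using ord ws1 by auto
    show "\<forall>j\<in>{1..k}. {p j..p j + q j} \<subseteq> {1..m}" using Pj by fastforce
    show "set S \<subseteq> {psi..psi + xi} \<union> (\<Union>j\<in>{1..k}. {p j..p j + q j})"
    proof
      fix y assume "y \<in> set S"
      with P3 have "y \<in> {psi..psi+xi} \<or> (\<exists>(a,b)\<in>set L. a \<le> y \<and> y \<le> b)" by blast
      thus "y \<in> {psi..psi + xi} \<union> (\<Union>j\<in>{1..k}. {p j..p j + q j})"
      proof
        assume "\<exists>(a,b)\<in>set L. a \<le> y \<and> y \<le> b"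
        then obtain a b where ab: "(a,b) \<in> set L" "a \<le> y" "y \<le> b" by blast
        then obtain c where "c \<in> {1..k}" "(a,b) = (p c, p c + q c)" using F(2) k_def by blast
        thus ?thesis using ab by auto
      qed auto
    qed
    show "\<forall>j\<in>{1..k}. 2 * int (card {c. c < length S \<and> S ! c \<in> {p j..p j + q j}}) - 1 \<le> int (q j)"
    proof
      fix j assume j: "j \<in> {1..k}"
      have "card {c. c < length S \<and> S ! c \<in> {p j..p j + q j}} = NN w (p j) (p j + q j)"
        using card_idx_NN w_def by simp
      moreover have "q j + 1 = 2 * NN w (p j) (p j + q j)" using Pj[OF j] by simp
      ultimately show "2 * int (card {c. c < length S \<and> S ! c \<in> {p j..p j + q j}}) - 1 \<le> int (q j)" by simp
    qed
    have KK: "set S \<inter> {psi..psi + xi} = {x}" using K(1) by (simp add: Int_commute)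
    have cx: "card {c. c < length S \<and> S ! c \<in> {x}} = w x"
      using card_idx[of "{x}" S] w_def by simp
    show "let K = set S \<inter> {psi..psi + xi} in (K = {psi} \<or> K = {psi + xi}) \<and>
          int (m div (2 * l)) * int (card {c. c < length S \<and> S ! c \<in> K}) - 1 \<le> int xi"
      unfolding Let_def KK cx using K(2) xi t_def w_def
      by (auto simp flip: of_nat_mult) 
    show "xi + 1 + (\<Sum>j = 1..k. q j + 1) + 2 * (l - length S) \<le> m"
      using budget F(4) k_def by simp
  qed
qed

lemma NN_pos_ex: "0 < NN w a b \<Longrightarrow> \<exists>y\<in>{a..b}. 0 < w y"
  unfolding NN_def by (rule ccontr) (simp add: sum.neutral)

lemma NN_zero: "\<forall>y\<in>{a..b}. w y = 0 \<Longrightarrow> NN w a b = 0"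
  unfolding NN_def by simp

lemma clus_build:
  fixes S :: "nat list" and m l zs ws :: nat
  assumes l1: "1 \<le> l" and m4: "4*l \<le> m" and len: "length S \<le> l" and len1: "1 \<le> length S"
  and setS: "set S \<subseteq> {1..m}"
  and zs: "zs = 2 * NN (wt S) 1 zs"
  and ws: "m + 1 - ws = 2 * NN (wt S) ws m" and ws1: "1 \<le> ws" "ws \<le> m+1" and zw: "zs < ws"
  and mid: "\<forall>y. zs < y \<longrightarrow> y < ws \<longrightarrow> wt S y = 0"
  shows "clustered m l S"
proof -
  define w where "w = wt S"
  define t where "t = m div (2*l)"
  have t2: "2 \<le> t" and t2l: "t * (2*l) \<le> m" using t_facts[OF l1 m4] t_def by auto
  have n: "length S = NN w 1 zs + NN w ws m"
  proof -
    have "length S = NN w 1 m" using NN_total[OF setS] w_def by simp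
    also have "\<dots> = NN w 1 zs + NN w (Suc zs) m" using NN_split[of 1 zs m w] zw ws1 by auto
    also have "NN w (Suc zs) m = NN w (Suc zs) (ws - 1) + NN w ws m" using NN_split[of "Suc zs" "ws - 1" m w] zw ws1 by auto
    also have "NN w (Suc zs) (ws - 1) = 0" using mid w_def by (intro NN_zero) auto
    finally show ?thesis by simp
  qed
  define A where "A = t * zs"
  define Bl where "Bl = t * (m + 1 - ws)"
  define P where "P = m + 1 - Bl"
  have s2: "zs + (m + 1 - ws) = 2 * length S" using n zs ws w_def by simp
  have AB: "A + Bl = 2 * (t * length S)"
  proof -
    have "A + Bl = t * (zs + (m + 1 - ws))" unfolding A_def Bl_def by (simp add: add_mult_distrib2)
    thus ?thesis using s2 by simp
  qed
  have tn: "t * length S \<le> t * l" using len by simp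
  have a4: "2 * (t * l) \<le> m" using t2l by (simp add: algebra_simps)
  have ABm: "A + Bl \<le> m" using AB tn a4 by linarith
  have zsA: "zs \<le> A" using t2 A_def by simp
  have wsB: "m + 1 - ws \<le> Bl" using t2 Bl_def by simp
  have AP: "A < P" using ABm P_def by simp
  have Pws: "P \<le> ws" using wsB P_def ws1 by simp
  define PB where "PB = (if 0 < zs then [(1::nat, A)] else [])"
  define SB where "SB = (if ws \<le> m then [(P, m)] else [])"
  define L where "L = PB @ SB"
  have P1: "\<forall>(a,b)\<in>set L. 1 \<le> a \<and> a < b \<and> b \<le> m \<and> {a..b} \<inter> set S \<noteq> {} \<and>
     t * min (Max ({a..b} \<inter> set S) - a + 1) (b - Min ({a..b} \<inter> set S) + 1) \<le> b + 1 - a"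
  proof (intro ballI, clarify)
    fix a b assume "(a,b) \<in> set L"
    hence "(a,b) \<in> set PB \<or> (a,b) \<in> set SB" unfolding L_def by auto
    thus "1 \<le> a \<and> a < b \<and> b \<le> m \<and> {a..b} \<inter> set S \<noteq> {} \<and>
     t * min (Max ({a..b} \<inter> set S) - a + 1) (b - Min ({a..b} \<inter> set S) + 1) \<le> b + 1 - a"
    proof
      assume h: "(a,b) \<in> set PB"
      hence z0: "0 < zs" and ab: "a = 1" "b = A" by (auto simp: PB_def split: if_splits)
      have "0 < NN w 1 zs" using z0 zs w_def by simp
      then obtain y where y: "y \<in> {1..zs}" "0 < w y" using NN_pos_ex by blast
      have yS: "y \<in> {a..b} \<inter> set S" using y wt_pos w_def ab zsA by auto
      have Kle: "\<forall>y'\<in>{a..b} \<inter> set S. y' \<le> zs"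
      proof
        fix y' assume y': "y' \<in> {a..b} \<inter> set S"
        hence "y' < ws" using ab AP Pws by auto
        moreover have "0 < w y'" using y' wt_pos w_def by auto
        ultimately show "y' \<le> zs" using mid[rule_format, of y'] w_def by (cases "zs < y'") auto
      qed
      have MK: "Max ({a..b} \<inter> set S) \<le> zs" using Kle yS by (subst Max_le_iff) auto
      have "min (Max ({a..b} \<inter> set S) - a + 1) (b - Min ({a..b} \<inter> set S) + 1) \<le> zs"
      proof -
        have ym: "y \<le> Max ({a..b} \<inter> set S)" by (rule Max_ge) (use yS in auto)
        have "min (Max ({a..b} \<inter> set S) - a + 1) (b - Min ({a..b} \<inter> set S) + 1) \<le> Max ({a..b} \<inter> set S) - a + 1"
          by (rule min.cobounded1)
        moreover have "1 \<le> y" using y by simp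
        ultimately show ?thesis using ym MK ab by linarith
      qed
      hence "t * min (Max ({a..b} \<inter> set S) - a + 1) (b - Min ({a..b} \<inter> set S) + 1) \<le> t * zs"
        by (rule mult_le_mono2)
      moreover have "2 * 1 \<le> t * zs" using z0 t2 by (intro mult_le_mono) auto
      hence "1 < A" using A_def by simp
      ultimately show ?thesis using ab A_def ABm yS by auto
    next
      assume h: "(a,b) \<in> set SB"
      hence w0: "ws \<le> m" and ab: "a = P" "b = m" by (auto simp: SB_def split: if_splits)
      have "0 < NN w ws m" using ws w0 w_def by simp
      then obtain y where y: "y \<in> {ws..m}" "0 < w y" using NN_pos_ex by blast
      have yS: "y \<in> {a..b} \<inter> set S" using y wt_pos w_def ab Pws by auto
      have Kge: "\<forall>y'\<in>{a..b} \<inter> set S. ws \<le> y'"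
      proof
        fix y' assume y': "y' \<in> {a..b} \<inter> set S"
        hence "zs < y'" using ab AP zsA by auto
        moreover have "0 < w y'" using y' wt_pos w_def by auto
        ultimately show "ws \<le> y'" using mid[rule_format, of y'] w_def by (cases "y' < ws") auto
      qed
      have MK: "ws \<le> Min ({a..b} \<inter> set S)" using Kge yS by (subst Min_ge_iff) auto
      have "min (Max ({a..b} \<inter> set S) - a + 1) (b - Min ({a..b} \<inter> set S) + 1) \<le> m + 1 - ws"
      proof -
        have "min (Max ({a..b} \<inter> set S) - a + 1) (b - Min ({a..b} \<inter> set S) + 1) \<le> b - Min ({a..b} \<inter> set S) + 1"
          by (rule min.cobounded2)
        thus ?thesis using MK ab w0 by linarith
      qed
      hence "t * min (Max ({a..b} \<inter> set S) - a + 1) (b - Min ({a..b} \<inter> set S) + 1) \<le> t * (m + 1 - ws)"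
        by (rule mult_le_mono2)
      moreover have "2 \<le> m + 1 - ws" using ws \<open>0 < NN w ws m\<close> unfolding w_def by linarith
      ultimately have tm: "t * min (Max ({a..b} \<inter> set S) - a + 1) (b - Min ({a..b} \<inter> set S) + 1) \<le> Bl"
        and two: "2 \<le> m + 1 - ws" using Bl_def by auto
      have Pp: "1 \<le> P" "P < m" "b + 1 - a = Bl" using ABm P_def wsB two ab by linarith+
      show ?thesis using Pp tm ab yS by auto
    qed
  qed
  have P2: "sorted_wrt (\<lambda>x y. snd x < fst y) L"
    unfolding L_def sorted_wrt_append using AP by (auto simp: PB_def SB_def)
  have P3: "\<forall>y\<in>set S. \<exists>(a,b)\<in>set L. a \<le> y \<and> y \<le> b"
  proof
    fix y assume yS: "y \<in> set S"
    hence y: "1 \<le> y" "y \<le> m" "0 < w y" using setS wt_pos w_def by auto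
    have "y \<le> zs \<or> ws \<le> y" using mid[rule_format, of y] y w_def by (cases "zs < y \<and> y < ws") auto
    thus "\<exists>(a,b)\<in>set L. a \<le> y \<and> y \<le> b"
    proof
      assume "y \<le> zs" thus ?thesis using y zsA by (auto simp: L_def PB_def)
    next
      assume "ws \<le> y" thus ?thesis using y Pws by (auto simp: L_def SB_def)
    qed
  qed
  have sPB: "sum_list (map (\<lambda>(a,b). b + 1 - a) PB) = A" using A_def by (auto simp: PB_def)
  have sSB: "sum_list (map (\<lambda>(a,b). b + 1 - a) SB) = Bl" using Bl_def ws1 P_def ABm by (auto simp: SB_def)
  have budget: "sum_list (map (\<lambda>(a,b). b + 1 - a) L) + 2 * (l - length S) \<le> m"
  proof -
    have a1: "sum_list (map (\<lambda>(a,b). b + 1 - a) L) = 2 * (t * length S)" unfolding L_def using sPB sSB AB by simp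
    have a2: "2 * (l - length S) \<le> t * (l - length S)" using t2 by simp
    have a3: "t * length S + t * (l - length S) = t * l" using len by (simp add: add_mult_distrib2[symmetric])
    show ?thesis using a1 a2 a3 a4 tn by linarith
  qed
  have Lne: "L \<noteq> []"
  proof
    assume "L = []"
    hence "zs = 0" "ws = m + 1" using ws1 by (auto simp: L_def PB_def SB_def split: if_splits)
    hence "length S = 0" using n by (simp add: NN_empty)
    thus False using len1 by simp
  qed
  define k where "k = length L"
  define p where "p = (\<lambda>j. fst (L!(j-1)))"
  define q where "q = (\<lambda>j. snd (L!(j-1)) - fst (L!(j-1)))"
  have abL: "\<forall>(a,b)\<in>set L. a \<le> b" using P1 by fastforce
  note F = fam[OF P2 abL p_def q_def]
  have Pj: "1 \<le> p j \<and> p j < p j + q j \<and> p j + q j \<le> m \<and>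
     t * min (Max ({p j..p j + q j} \<inter> set S) - p j + 1) (p j + q j - Min ({p j..p j + q j} \<inter> set S) + 1) \<le> p j + q j + 1 - p j"
    if "j \<in> {1..k}" for j
  proof -
    have "(p j, p j + q j) \<in> set L" using F(1) that k_def by auto
    thus ?thesis using P1 by fastforce
  qed
  show ?thesis
    unfolding clustered_def
  proof (rule exI[of _ k], rule exI[of _ p], rule exI[of _ q], intro conjI)
    show "1 \<le> k" using Lne k_def by (simp add: Suc_leI)
    show "\<forall>c\<in>{1..k}. p c \<in> {1..m} \<and> 1 \<le> q c" using Pj by fastforce
    show "\<forall>c\<in>{1..k}. \<forall>d\<in>{1..k}. c \<noteq> d \<longrightarrow> {p c..p c + q c} \<inter> {p d..p d + q d} = {}" using F(3) k_def by simp
    show "\<forall>c\<in>{1..k}. {p c..p c + q c} \<subseteq> {1..m}" using Pj by fastforce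
    show "set S \<subseteq> (\<Union>c\<in>{1..k}. {p c..p c + q c})"
    proof
      fix y assume "y \<in> set S"
      with P3 obtain a b where ab: "(a,b) \<in> set L" "a \<le> y" "y \<le> b" by blast
      then obtain c where "c \<in> {1..k}" "(a,b) = (p c, p c + q c)" using F(2) k_def by blast
      thus "y \<in> (\<Union>c\<in>{1..k}. {p c..p c + q c})" using ab by auto
    qed
    show "\<forall>c\<in>{1..k}. let K = {p c..p c + q c} \<inter> set S in
          m div (2 * l) * min (Max K - p c + 1) (p c + q c - Min K + 1) \<le> q c + 1"
    proof
      fix c assume c: "c \<in> {1..k}"
      have "p c + q c + 1 - p c = q c + 1" by simp
      thus "let K = {p c..p c + q c} \<inter> set S in
          m div (2 * l) * min (Max K - p c + 1) (p c + q c - Min K + 1) \<le> q c + 1"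
        unfolding Let_def using Pj[OF c] t_def by simp
    qed
    show "(\<Sum>j = 1..k. q j + 1) + 2 * (l - length S) \<le> m"
      using budget F(4) k_def by simp
  qed
qed

theorem lemma20:
  fixes m l :: nat and S :: "nat list"
  assumes "l \<ge> 1" and "m \<ge> 4 * l"
    and "1 \<le> length S" and "length S \<le> l"
    and "set S \<subseteq> {1..m}"
  shows "clustered m l S \<or> dispersed m l S"
proof -
  note l1 = assms(1) and m4 = assms(2) and len1 = assms(3) and len = assms(4) and setS = assms(5)
  define w where "w = wt S"
  define t where "t = m div (2*l)"
  have t2: "2 \<le> t" and t2l: "t * (2*l) \<le> m" using t_facts[OF l1 m4] t_def by auto
  have a4: "2 * (t * l) \<le> m" using t2l by (simp add: algebra_simps)
  have ntot: "NN w 1 m = length S" using NN_total[OF setS] w_def by simp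
  define Z where "Z = {z. z \<le> m \<and> z \<le> 2 * NN w 1 z}"
  define zs where "zs = Max Z"
  have finZ: "finite Z" unfolding Z_def by (rule finite_subset[of _ "{..m}"]) auto
  have Z0: "0 \<in> Z" unfolding Z_def by (simp add: NN_empty)
  have zsZ: "zs \<in> Z" unfolding zs_def using finZ Z0 by (intro Max_in) auto
  have zsH: "\<forall>z. zs < z \<longrightarrow> z \<le> m \<longrightarrow> 2 * NN w 1 z < z"
  proof (intro allI impI)
    fix z assume z: "zs < z" "z \<le> m"
    show "2 * NN w 1 z < z"
    proof (rule ccontr)
      assume "\<not> 2 * NN w 1 z < z"
      hence "z \<in> Z" unfolding Z_def using z by auto
      hence "z \<le> zs" unfolding zs_def using finZ by (intro Max_ge) auto
      thus False using z by simp
    qed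
  qed
  have zsm: "zs \<le> m" using zsZ Z_def by auto
  have zs: "zs = 2 * NN w 1 zs"
  proof -
    define E where "E = 2 * NN w 1 zs"
    have zE: "zs \<le> E" using zsZ Z_def E_def by auto
    have "NN w 1 zs \<le> NN w 1 m" using zsm by (intro NN_mono) auto
    hence Em: "E \<le> 2 * l" using E_def ntot len by linarith
    have "NN w 1 zs \<le> NN w 1 E" using zE by (intro NN_mono) auto
    hence "E \<in> Z" unfolding Z_def using Em m4 E_def by auto
    hence "E \<le> zs" unfolding zs_def using finZ by (intro Max_ge) auto
    thus ?thesis using zE E_def by simp
  qed
  define W where "W = {s. 1 \<le> s \<and> s \<le> m + 1 \<and> m + 1 - s \<le> 2 * NN w s m}"
  define ws where "ws = Min W"
  have finW: "finite W" unfolding W_def by (rule finite_subset[of _ "{..m+1}"]) auto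
  have Wm: "m + 1 \<in> W" unfolding W_def by (simp add: NN_empty)
  have wsW: "ws \<in> W" unfolding ws_def using finW Wm by (intro Min_in) auto
  have ws1: "1 \<le> ws" "ws \<le> m + 1" using wsW W_def by auto
  have wsH: "\<forall>s. 1 \<le> s \<longrightarrow> s < ws \<longrightarrow> 2 * NN w s m < m + 1 - s"
  proof (intro allI impI)
    fix s assume s: "1 \<le> s" "s < ws"
    show "2 * NN w s m < m + 1 - s"
    proof (rule ccontr)
      assume "\<not> 2 * NN w s m < m + 1 - s"
      hence "s \<in> W" unfolding W_def using s ws1 by auto
      hence "ws \<le> s" unfolding ws_def using finW by (intro Min_le) auto
      thus False using s by simp
    qed
  qed
  have ws: "m + 1 - ws = 2 * NN w ws m"
  proof -
    define E where "E = 2 * NN w ws m"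
    have zE: "m + 1 - ws \<le> E" using wsW W_def E_def by auto
    have "NN w ws m \<le> NN w 1 m" using ws1 by (intro NN_mono) auto
    hence Em: "E \<le> 2 * l" using E_def ntot len by linarith
    define s' where "s' = m + 1 - E"
    have s'ws: "s' \<le> ws" using zE s'_def ws1 by linarith
    have "NN w ws m \<le> NN w s' m" using s'ws by (intro NN_mono) auto
    hence "s' \<in> W" unfolding W_def using Em m4 E_def s'_def l1 by auto
    hence "ws \<le> s'" unfolding ws_def using finW by (intro Min_le) auto
    thus ?thesis using zE E_def s'_def s'ws Em m4 by linarith
  qed
  have zw: "zs < ws"
  proof -
    have "NN w 1 zs \<le> NN w 1 m" using zsm by (intro NN_mono) auto
    moreover have "NN w ws m \<le> NN w 1 m" using ws1 by (intro NN_mono) auto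
    ultimately show ?thesis using zs ws ntot len m4 l1 ws1 by linarith
  qed
  show ?thesis
  proof (cases "\<forall>y. zs < y \<longrightarrow> y < ws \<longrightarrow> wt S y = 0")
    case True
    have "clustered m l S"
      by (rule clus_build[OF l1 m4 len len1 setS _ _ ws1 zw True]) (use zs ws w_def in auto)
    thus ?thesis by simp
  next
    case False
    then obtain y0 where y0: "zs < y0" "y0 < ws" "0 < w y0" using w_def by auto
    define Mid where "Mid = {Suc zs..ws - 1}"
    define X where "X = {x\<in>Mid. 0 < w x}"
    define Nb where "Nb = (\<lambda>x. {x - (t * w x - 2)..x + (t * w x - 2)})"
    have finX: "finite X" unfolding X_def Mid_def by auto
    have y0X: "y0 \<in> X" unfolding X_def Mid_def using y0 by auto
    have twx: "2 \<le> t * w x" if "x \<in> X" for x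
    proof -
      have "2 * 1 \<le> t * w x" using t2 that X_def by (intro mult_le_mono) auto
      thus ?thesis by simp
    qed
    have cNb: "card (Nb x) + 1 \<le> 2 * t * w x" if "x \<in> X" for x
    proof -
      have "card (Nb x) = x + (t * w x - 2) + 1 - (x - (t * w x - 2))" unfolding Nb_def by simp
      thus ?thesis using twx[OF that] by linarith
    qed
    define nM where "nM = NN w (Suc zs) (ws - 1)"
    have sX: "(\<Sum>x\<in>X. w x) = nM"
    proof -
      have "(\<Sum>x\<in>Mid. w x) = (\<Sum>x\<in>X. w x)"
        by (rule sum.mono_neutral_right) (auto simp: X_def Mid_def)
      thus ?thesis unfolding nM_def NN_def Mid_def by simp
    qed
    have "card (\<Union>x\<in>X. Nb x) \<le> (\<Sum>x\<in>X. card (Nb x))" by (rule card_UN_le[OF finX])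
    moreover have "(\<Sum>x\<in>X. card (Nb x) + 1) \<le> (\<Sum>x\<in>X. 2 * t * w x)" by (rule sum_mono) (use cNb in auto)
    moreover have "(\<Sum>x\<in>X. card (Nb x) + 1) = (\<Sum>x\<in>X. card (Nb x)) + card X" unfolding sum.distrib by simp
    moreover have "(\<Sum>x\<in>X. 2 * t * w x) = 2 * t * nM" using sX by (simp add: sum_distrib_left[symmetric])
    moreover have "1 \<le> card X" using finX y0X by (metis One_nat_def Suc_leI card_gt_0_iff empty_iff)
    ultimately have cU: "card (\<Union>x\<in>X. Nb x) < 2 * t * nM" by linarith
    have n3: "length S = NN w 1 zs + nM + NN w ws m"
    proof -
      have "length S = NN w 1 zs + NN w (Suc zs) m" using ntot NN_split[of 1 zs m w] zw ws1 by auto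
      also have "NN w (Suc zs) m = NN w (Suc zs) (ws - 1) + NN w ws m" using NN_split[of "Suc zs" "ws - 1" m w] zw ws1 by auto
      finally show ?thesis unfolding nM_def by simp
    qed
    have cM: "card Mid + 2 * (length S - nM) = m" unfolding Mid_def using n3 zs ws zw ws1 by simp
    have "2 * (t * nM) \<le> card Mid"
    proof -
      have b1: "2 * (length S - nM) \<le> 2 * (t * (length S - nM))" using t2 by simp
      have b2: "t * nM + t * (length S - nM) = t * length S" using n3 by (simp add: add_mult_distrib2[symmetric])
      have b3: "t * length S \<le> t * l" using len by simp
      show ?thesis using cM b1 b2 b3 a4 by linarith
    qed
    hence "2 * t * nM \<le> card Mid" by (simp add: mult.assoc)
    with cU have "card (\<Union>x\<in>X. Nb x) < card Mid" by simp
    hence "\<not> Mid \<subseteq> (\<Union>x\<in>X. Nb x)"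
      using card_mono[of "\<Union>x\<in>X. Nb x" Mid] finX Nb_def by (auto simp: Nb_def)
    then obtain y where yM: "y \<in> Mid" and yN: "\<forall>x\<in>X. y \<notin> Nb x" by blast
    have yX: "y \<notin> X"
    proof
      assume "y \<in> X"
      hence "y \<in> Nb y" unfolding Nb_def by auto
      thus False using yN \<open>y \<in> X\<close> by blast
    qed
    have key: "\<exists>psi xi x. zs < psi \<and> psi + xi < ws \<and> set S \<inter> {psi..psi+xi} = {x} \<and>
                 (x = psi \<or> x = psi + xi) \<and> xi + 1 = t * wt S x"
    proof (cases "\<exists>x\<in>X. x < y")
      case True
      define x0 where "x0 = Max {x\<in>X. x < y}"
      have x0in: "x0 \<in> {x\<in>X. x < y}" unfolding x0_def using True finX by (intro Max_in) auto
      have x0max: "\<And>x. x \<in> X \<Longrightarrow> x < y \<Longrightarrow> x \<le> x0" unfolding x0_def using finX by (intro Max_ge) auto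
      have "y \<notin> Nb x0" using yN x0in by auto
      hence yg: "x0 + (t * w x0 - 2) < y" using x0in unfolding Nb_def by auto
      have tw: "2 \<le> t * w x0" using twx x0in by auto
      define xi where "xi = t * w x0 - 1"
      have Kx: "set S \<inter> {x0..x0+xi} = {x0}"
      proof
        show "{x0} \<subseteq> set S \<inter> {x0..x0+xi}" using x0in wt_pos w_def X_def by auto
        show "set S \<inter> {x0..x0+xi} \<subseteq> {x0}"
        proof
          fix y' assume y': "y' \<in> set S \<inter> {x0..x0+xi}"
          show "y' \<in> {x0}"
          proof (rule ccontr)
            assume "y' \<notin> {x0}"
            hence gt: "x0 < y'" using y' by auto
            have le: "y' \<le> y" using y' yg xi_def tw by auto
            have "y' \<in> X" unfolding X_def Mid_def using y' wt_pos w_def gt le x0in yM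
              by (auto simp: X_def Mid_def)
            hence "y' \<noteq> y" using yX by auto
            hence "y' < y" using le by simp
            hence "y' \<le> x0" using x0max \<open>y' \<in> X\<close> by auto
            thus False using gt by simp
          qed
        qed
      qed
      show ?thesis
      proof (intro exI conjI)
        show "zs < x0" using x0in X_def Mid_def by auto
        show "x0 + xi < ws" using yg yM Mid_def xi_def tw by auto
        show "set S \<inter> {x0..x0+xi} = {x0}" by (rule Kx)
        show "x0 = x0 \<or> x0 = x0 + xi" by simp
        show "xi + 1 = t * wt S x0" using xi_def tw w_def by simp
      qed
    next
      case False
      have ex: "\<exists>x\<in>X. y < x" using y0X False yX by (metis linorder_neqE_nat)
      define x0 where "x0 = Min {x\<in>X. y < x}"
      have x0in: "x0 \<in> {x\<in>X. y < x}" unfolding x0_def using ex finX by (intro Min_in) auto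
      have x0min: "\<And>x. x \<in> X \<Longrightarrow> y < x \<Longrightarrow> x0 \<le> x" unfolding x0_def using finX by (intro Min_le) auto
      have "y \<notin> Nb x0" using yN x0in by auto
      hence yl: "y < x0 - (t * w x0 - 2)" using x0in unfolding Nb_def by auto
      have tw: "2 \<le> t * w x0" using twx x0in by auto
      define xi where "xi = t * w x0 - 1"
      define psi where "psi = x0 - xi"
      have px: "psi + xi = x0" using yl psi_def xi_def tw by auto
      have py: "y \<le> psi" using yl psi_def xi_def tw by auto
      have Kx: "set S \<inter> {psi..psi+xi} = {x0}"
      proof
        show "{x0} \<subseteq> set S \<inter> {psi..psi+xi}" using x0in wt_pos w_def X_def px by auto
        show "set S \<inter> {psi..psi+xi} \<subseteq> {x0}"
        proof
          fix y' assume y': "y' \<in> set S \<inter> {psi..psi+xi}"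
          show "y' \<in> {x0}"
          proof (rule ccontr)
            assume "y' \<notin> {x0}"
            hence lt: "y' < x0" using y' px by auto
            have ge: "y \<le> y'" using y' py by auto
            have "y' \<in> X" using y' wt_pos w_def lt ge x0in yM
              by (auto simp: X_def Mid_def)
            hence "y' \<noteq> y" using yX by auto
            hence "y < y'" using ge by simp
            hence "x0 \<le> y'" using x0min \<open>y' \<in> X\<close> by auto
            thus False using lt by simp
          qed
        qed
      qed
      show ?thesis
      proof (intro exI conjI)
        show "zs < psi" using py yM Mid_def by auto
        show "psi + xi < ws" using px x0in X_def Mid_def ws1 by auto
        show "set S \<inter> {psi..psi+xi} = {x0}" by (rule Kx)
        show "x0 = psi \<or> x0 = psi + xi" using px by simp
        show "xi + 1 = t * wt S x0" using xi_def tw w_def by simp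
      qed
    qed
    then obtain psi xi x where k: "zs < psi" "psi + xi < ws" "set S \<inter> {psi..psi+xi} = {x}"
      "x = psi \<or> x = psi + xi" "xi + 1 = t * wt S x" by blast
    have "dispersed m l S"
      by (rule disp_build[OF l1 m4 len setS _ _ _ ws1 _ k(1,2,3,4)]) (use zs zsH ws wsH k(5) w_def t_def in auto)
    thus ?thesis by simp
  qed
qed

end
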